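(* Let $n\ge2$ and let $\equiv$ be a lattice congruence of the weak order on $S_n$. The following are equivalent: (i) $\mathrm{id}_n\equiv c_{n-1}(\mathrm{id}_{n-1})$; (ii) there is $\pi\in S_{n-1}$ such that $c_i(\pi)\equiv c_{i+1}(\pi)$ for all $1\le i<n$; (iii) for all $\pi\in S_{n-1}$ and all $1\le i<n$, $c_i(\pi)\equiv c_{i+1}(\pi)$.
   Context: $S_n$ is the set of permutations of $[n]$ in one-line notation, ordered by the weak order (inclusion of inversion sets $\mathrm{inv}(\pi)=\{(a_i,a_j):i<j,\ a_i>a_j\}$), which is a lattice. A lattice congruence is an equivalence relation on $S_n$ compatible with joins and meets: $\pi\equiv\pi'$ and $\rho\equiv\rho'$ imply $\pi\vee\rho\equiv\pi'\vee\rho'$ and $\pi\wedge\rho\equiv\pi'\wedge\rho'$. $\mathrm{id}_n=12\cdots n$. For $\pi\in S_{n-1}$ and $1\le i\le n$, $c_i(\pi)\in S_n$ is obtained by inserting the value $n$ at position $i$ of $\pi$. *)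

theory Defs
  imports Main
begin

definition perms :: "nat \<Rightarrow> nat list set" where
  "perms n = {xs. distinct xs \<and> set xs = {1..n}}"

definition inv_set :: "nat list \<Rightarrow> (nat \<times> nat) set" where
  "inv_set xs = {(xs ! i, xs ! j) | i j. i < j \<and> j < length xs \<and> xs ! i > xs ! j}"

definition weak_le :: "nat list \<Rightarrow> nat list \<Rightarrow> bool" where
  "weak_le p q \<longleftrightarrow> inv_set p \<subseteq> inv_set q"

definition is_join :: "nat \<Rightarrow> nat list \<Rightarrow> nat list \<Rightarrow> nat list \<Rightarrow> bool" where
  "is_join n p q r \<longleftrightarrow> r \<in> perms n \<and> weak_le p r \<and> weak_le q r \<and>
     (\<forall>s\<in>perms n. weak_le p s \<and> weak_le q s \<longrightarrow> weak_le r s)"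

definition is_meet :: "nat \<Rightarrow> nat list \<Rightarrow> nat list \<Rightarrow> nat list \<Rightarrow> bool" where
  "is_meet n p q r \<longleftrightarrow> r \<in> perms n \<and> weak_le r p \<and> weak_le r q \<and>
     (\<forall>s\<in>perms n. weak_le s p \<and> weak_le s q \<longrightarrow> weak_le s r)"

definition lattice_congruence :: "nat \<Rightarrow> (nat list \<times> nat list) set \<Rightarrow> bool" where
  "lattice_congruence n R \<longleftrightarrow> equiv (perms n) R \<and>
     (\<forall>p p' q q' r r'. (p, p') \<in> R \<longrightarrow> (q, q') \<in> R \<longrightarrow>
        (is_join n p q r \<longrightarrow> is_join n p' q' r' \<longrightarrow> (r, r') \<in> R) \<and>
        (is_meet n p q r \<longrightarrow> is_meet n p' q' r' \<longrightarrow> (r, r') \<in> R))"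

definition id_perm :: "nat \<Rightarrow> nat list" where
  "id_perm n = [1..<n+1]"

text \<open>c_i(pi): insert the value n = length pi + 1 at position i (1-indexed).\<close>
definition ins_max :: "nat \<Rightarrow> nat list \<Rightarrow> nat list" where
  "ins_max i p = take (i - 1) p @ [length p + 1] @ drop (i - 1) p"

end

theory Submission
  imports Defs
begin

lemma inv_Nil[simp]: "inv_set [] = {}"
  unfolding inv_set_def by auto

lemma inv_Cons: "inv_set (x # xs) = {(x,y) | y. y \<in> set xs \<and> y < x} \<union> inv_set xs"
proof (rule set_eqI, rule iffI)
  fix q assume "q \<in> inv_set (x#xs)"
  then obtain i j where q: "q = ((x#xs)!i, (x#xs)!j)" "i<j" "j < length (x#xs)" "(x#xs)!i > (x#xs)!j"
    unfolding inv_set_def by blast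
  then obtain j' where j: "j = Suc j'" by (cases j) auto
  show "q \<in> {(x,y) | y. y \<in> set xs \<and> y < x} \<union> inv_set xs"
  proof (cases i)
    case 0 then show ?thesis using q j by auto
  next
    case (Suc i')
    then have "q = (xs!i', xs!j') \<and> i' < j' \<and> j' < length xs \<and> xs!i' > xs!j'" using q j by auto
    then have "q \<in> inv_set xs" unfolding inv_set_def by blast
    then show ?thesis by blast
  qed
next
  fix q assume "q \<in> {(x,y) | y. y \<in> set xs \<and> y < x} \<union> inv_set xs"
  then show "q \<in> inv_set (x#xs)"
  proof
    assume "q \<in> {(x,y) | y. y \<in> set xs \<and> y < x}"
    then obtain y where y: "q = (x,y)" "y \<in> set xs" "y<x" by blast
    then obtain j where j: "j < length xs" "xs!j = y" by (auto simp: in_set_conv_nth)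
    have "q = ((x#xs)!0, (x#xs)!Suc j) \<and> 0 < Suc j \<and> Suc j < length (x#xs) \<and> (x#xs)!0 > (x#xs)!Suc j"
      using y j by auto
    then show ?thesis unfolding inv_set_def by blast
  next
    assume "q \<in> inv_set xs"
    then obtain i j where q: "q = (xs!i, xs!j)" "i<j" "j < length xs" "xs!i > xs!j"
      unfolding inv_set_def by blast
    have "q = ((x#xs)!Suc i, (x#xs)!Suc j) \<and> Suc i < Suc j \<and> Suc j < length (x#xs) \<and> (x#xs)!Suc i > (x#xs)!Suc j"
      using q by auto
    then show ?thesis unfolding inv_set_def by blast
  qed
qed

lemma inv_append: "inv_set (xs @ ys) = inv_set xs \<union> inv_set ys \<union> {(x,y). x \<in> set xs \<and> y \<in> set ys \<and> y < x}"
  by (induction xs) (auto simp: inv_Cons)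

lemma inv_sub: "inv_set xs \<subseteq> set xs \<times> set xs"
  by (induction xs) (auto simp: inv_Cons)

lemma inv_lt: "(x,y) \<in> inv_set xs \<Longrightarrow> y < x"
  unfolding inv_set_def by auto

lemma inv_trans: "distinct s \<Longrightarrow> (x,y) \<in> inv_set s \<Longrightarrow> (y,z) \<in> inv_set s \<Longrightarrow> (x,z) \<in> inv_set s"
proof (induction s)
  case Nil then show ?case by simp
next
  case (Cons a s)
  then show ?case using inv_sub[of s] inv_lt[of _ _ s] by (auto simp: inv_Cons) (meson less_trans)
qed

lemma inv_cotrans: "distinct s \<Longrightarrow> (x,z) \<in> inv_set s \<Longrightarrow> y \<in> set s \<Longrightarrow> z < y \<Longrightarrow> y < x
   \<Longrightarrow> (x,y) \<in> inv_set s \<or> (y,z) \<in> inv_set s"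
proof (induction s)
  case Nil then show ?case by simp
next
  case (Cons a s)
  then show ?case using inv_sub[of s] inv_lt[of _ _ s] by (auto simp: inv_Cons)
qed

lemma inv_sorted: "sorted xs \<Longrightarrow> inv_set xs = {}"
  by (induction xs) (auto simp: inv_Cons)

lemma lc_equiv: "lattice_congruence n R \<Longrightarrow> equiv (perms n) R"
  unfolding lattice_congruence_def by blast

lemma lc_refl: "lattice_congruence n R \<Longrightarrow> x \<in> perms n \<Longrightarrow> (x,x) \<in> R"
  using lc_equiv unfolding equiv_def refl_on_def by blast

lemma lc_sym: "lattice_congruence n R \<Longrightarrow> (x,y) \<in> R \<Longrightarrow> (y,x) \<in> R"
  using lc_equiv unfolding equiv_def sym_def by blast

lemma lc_trans: "lattice_congruence n R \<Longrightarrow> (x,y) \<in> R \<Longrightarrow> (y,z) \<in> R \<Longrightarrow> (x,z) \<in> R"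
  using lc_equiv unfolding equiv_def trans_def by blast

lemma lc_join: "lattice_congruence n R \<Longrightarrow> (a,a') \<in> R \<Longrightarrow> (b,b') \<in> R \<Longrightarrow>
   is_join n a b u \<Longrightarrow> is_join n a' b' u' \<Longrightarrow> (u,u') \<in> R"
  unfolding lattice_congruence_def by blast

lemma lc_meet: "lattice_congruence n R \<Longrightarrow> (a,a') \<in> R \<Longrightarrow> (b,b') \<in> R \<Longrightarrow>
   is_meet n a b u \<Longrightarrow> is_meet n a' b' u' \<Longrightarrow> (u,u') \<in> R"
  unfolding lattice_congruence_def by blast

lemma join_easy: "u \<in> perms n \<Longrightarrow> inv_set u = inv_set a \<union> inv_set b \<Longrightarrow> is_join n a b u"
  unfolding is_join_def weak_le_def by auto

lemma meet_easy: "u \<in> perms n \<Longrightarrow> inv_set u = inv_set a \<inter> inv_set b \<Longrightarrow> is_meet n a b u"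
  unfolding is_meet_def weak_le_def by auto

lemma convex:
  assumes "lattice_congruence n R" "(a,b) \<in> R" "z \<in> perms n"
    "inv_set a \<subseteq> inv_set z" "inv_set z \<subseteq> inv_set b"
  shows "(a,z) \<in> R \<and> (z,b) \<in> R"
proof -
  have bp: "b \<in> perms n" using assms(1,2) lc_equiv unfolding equiv_def refl_on_def by blast
  have j1: "is_join n z a z" by (rule join_easy) (use assms in auto)
  have j2: "is_join n z b b" by (rule join_easy) (use assms bp in auto)
  have zb: "(z,b) \<in> R" using lc_join[OF assms(1) lc_refl[OF assms(1,3)] assms(2) j1 j2] .
  have "(a,z) \<in> R" using lc_trans[OF assms(1) assms(2) lc_sym[OF assms(1) zb]] .
  with zb show ?thesis by blast
qed

lemmas inv_simps = inv_Cons inv_append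

lemma inv_s:
  assumes "n \<ge> 2"
  shows "inv_set (ins_max (n - 1) (id_perm (n - 1))) = {(n, n-1)}"
    and "ins_max (n - 1) (id_perm (n - 1)) \<in> perms n"
proof -
  obtain m where m: "n = Suc (Suc m)" using assms by (metis add_2_eq_Suc le_Suc_ex)
  have e: "ins_max (n - 1) (id_perm (n - 1)) = [1..<Suc m] @ [Suc (Suc m), Suc m]"
    unfolding ins_max_def id_perm_def m by simp
  show "inv_set (ins_max (n - 1) (id_perm (n - 1))) = {(n, n-1)}"
    unfolding e using m by (auto simp: inv_simps inv_sorted)
  show "ins_max (n - 1) (id_perm (n - 1)) \<in> perms n"
    unfolding e perms_def using m by auto
qed

lemma id_props: "inv_set (id_perm n) = {}" "id_perm n \<in> perms n"
  unfolding id_perm_def perms_def by (rule inv_sorted, simp del: upt_Suc) auto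

lemma stepA:
  assumes LC: "lattice_congruence n R" and n2: "n \<ge> 2" and c: "Suc c = n"
    and H: "(id_perm n, ins_max (n - 1) (id_perm (n - 1))) \<in> R"
    and P: "al @ [c,n] @ be \<in> perms n"
  shows "(al @ [c,n] @ be, al @ [n,c] @ be) \<in> R"
proof -
  have P2: "al @ [n,c] @ be \<in> perms n" using P unfolding perms_def by auto
  have j1: "is_join n (id_perm n) (al @ [c,n] @ be) (al @ [c,n] @ be)"
    by (rule join_easy[OF P]) (simp add: id_props)
  have d: "distinct (al @ [c,n] @ be)" using P unfolding perms_def by blast
  have "inv_set (al @ [n,c] @ be) = inv_set (ins_max (n - 1) (id_perm (n - 1))) \<union> inv_set (al @ [c,n] @ be)"
    unfolding inv_s[OF n2] using d c by (auto simp: inv_simps)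
  then have j2: "is_join n (ins_max (n - 1) (id_perm (n - 1))) (al @ [c,n] @ be) (al @ [n,c] @ be)"
    by (rule join_easy[OF P2])
  show ?thesis by (rule lc_join[OF LC H lc_refl[OF LC P] j1 j2])
qed

lemma stepL0:
  assumes LC: "lattice_congruence n R" and n2: "n \<ge> 2" and c: "Suc c = n"
    and H: "(id_perm n, ins_max (n - 1) (id_perm (n - 1))) \<in> R"
    and bc: "b < c"
    and P: "al @ [c,b,n] @ be \<in> perms n"
  shows "(al @ [c,b,n] @ be, al @ [n,c,b] @ be) \<in> R"
proof -
  have d: "distinct (al @ [c,b,n] @ be)" using P unfolding perms_def by blast
  have Pb: "(al @ [b]) @ [c,n] @ be \<in> perms n" using P unfolding perms_def by auto
  have Pt: "al @ [n,c,b] @ be \<in> perms n" using P unfolding perms_def by auto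
  have A: "(al @ [b,c,n] @ be, al @ [b,n,c] @ be) \<in> R"
    using stepA[OF LC n2 c H Pb] by simp
  have j1: "is_join n (al @ [b,c,n] @ be) (al @ [c,b,n] @ be) (al @ [c,b,n] @ be)"
    by (rule join_easy[OF P]) (use d bc c in \<open>auto simp: inv_simps\<close>)
  have s1: "inv_set (al @ [b,n,c] @ be) \<subseteq> inv_set (al @ [n,c,b] @ be)"
    using d bc c by (auto simp: inv_simps)
  have s2: "inv_set (al @ [c,b,n] @ be) \<subseteq> inv_set (al @ [n,c,b] @ be)"
    using d bc c by (auto simp: inv_simps)
  have s3: "inv_set (al @ [n,c,b] @ be) \<subseteq> inv_set (al @ [b,n,c] @ be) \<union> inv_set (al @ [c,b,n] @ be) \<union> {(n,b)}"
    using d bc c by (auto simp: inv_simps)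
  have m1: "(n,c) \<in> inv_set (al @ [b,n,c] @ be)" using c by (auto simp: inv_simps)
  have m2: "(c,b) \<in> inv_set (al @ [c,b,n] @ be)" using bc by (auto simp: inv_simps)
  have j2: "is_join n (al @ [b,n,c] @ be) (al @ [c,b,n] @ be) (al @ [n,c,b] @ be)"
    unfolding is_join_def weak_le_def
  proof (intro conjI Pt s1 s2 ballI impI)
    fix s assume sP: "s \<in> perms n" and ss: "inv_set (al @ [b,n,c] @ be) \<subseteq> inv_set s \<and> inv_set (al @ [c,b,n] @ be) \<subseteq> inv_set s"
    have "(n,b) \<in> inv_set s"
      using inv_trans[of s n c b] sP ss m1 m2 unfolding perms_def by blast
    then show "inv_set (al @ [n,c,b] @ be) \<subseteq> inv_set s" using s3 ss by blast
  qed
  show ?thesis by (rule lc_join[OF LC A lc_refl[OF LC P] j1 j2])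
qed

lemma stepL:
  assumes LC: "lattice_congruence n R" and n2: "n \<ge> 2" and c: "Suc c = n"
    and H: "(id_perm n, ins_max (n - 1) (id_perm (n - 1))) \<in> R"
    and bc: "b < c"
    and P: "al @ [c,b,n] @ be \<in> perms n"
  shows "(al @ [c,b,n] @ be, al @ [c,n,b] @ be) \<in> R"
proof -
  have d: "distinct (al @ [c,b,n] @ be)" using P unfolding perms_def by blast
  have Pm: "al @ [c,n,b] @ be \<in> perms n" using P unfolding perms_def by auto
  have "inv_set (al @ [c,b,n] @ be) \<subseteq> inv_set (al @ [c,n,b] @ be)"
    using d bc c by (auto simp: inv_simps)
  moreover have "inv_set (al @ [c,n,b] @ be) \<subseteq> inv_set (al @ [n,c,b] @ be)"
    using d bc c by (auto simp: inv_simps)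
  ultimately show ?thesis
    using convex[OF LC stepL0[OF LC n2 c H bc P] Pm] by blast
qed

lemma stepR:
  assumes LC: "lattice_congruence n R" and n2: "n \<ge> 2" and c: "Suc c = n"
    and H: "(id_perm n, ins_max (n - 1) (id_perm (n - 1))) \<in> R"
    and bc: "b < c"
    and P: "al @ [b,n,c] @ be \<in> perms n"
  shows "(al @ [b,n,c] @ be, al @ [n,b,c] @ be) \<in> R"
proof -
  have d: "distinct (al @ [b,n,c] @ be)" using P unfolding perms_def by blast
  have PZ: "al @ [c,b,n] @ be \<in> perms n" using P unfolding perms_def by auto
  have PY: "al @ [c,n,b] @ be \<in> perms n" using P unfolding perms_def by auto
  have PX: "al @ [n,b,c] @ be \<in> perms n" using P unfolding perms_def by auto
  have Pbot: "al @ [b,c,n] @ be \<in> perms n" using P unfolding perms_def by auto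
  have "inv_set (al @ [c,b,n] @ be) \<subseteq> inv_set (al @ [c,n,b] @ be)"
    using d bc c by (auto simp: inv_simps)
  moreover have "inv_set (al @ [c,n,b] @ be) \<subseteq> inv_set (al @ [n,c,b] @ be)"
    using d bc c by (auto simp: inv_simps)
  ultimately have YT: "(al @ [c,n,b] @ be, al @ [n,c,b] @ be) \<in> R"
    using convex[OF LC stepL0[OF LC n2 c H bc PZ] PY] by blast
  have j1: "is_meet n (al @ [n,b,c] @ be) (al @ [n,c,b] @ be) (al @ [n,b,c] @ be)"
    by (rule meet_easy[OF PX]) (use d bc c in \<open>auto simp: inv_simps\<close>)
  have s1: "inv_set (al @ [b,c,n] @ be) \<subseteq> inv_set (al @ [n,b,c] @ be)"
    using d bc c by (auto simp: inv_simps)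
  have s2: "inv_set (al @ [b,c,n] @ be) \<subseteq> inv_set (al @ [c,n,b] @ be)"
    using d bc c by (auto simp: inv_simps)
  have s3: "inv_set (al @ [n,b,c] @ be) \<inter> inv_set (al @ [c,n,b] @ be) \<subseteq> inv_set (al @ [b,c,n] @ be) \<union> {(n,b)}"
    using d bc c by (auto simp: inv_simps)
  have m1: "(n,c) \<notin> inv_set (al @ [c,n,b] @ be)" using d c inv_lt inv_sub[of al] inv_sub[of be] by (auto simp: inv_simps)
  have m2: "(c,b) \<notin> inv_set (al @ [n,b,c] @ be)" using d bc inv_lt inv_sub[of al] inv_sub[of be] by (auto simp: inv_simps)
  have j2: "is_meet n (al @ [n,b,c] @ be) (al @ [c,n,b] @ be) (al @ [b,c,n] @ be)"
    unfolding is_meet_def weak_le_def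
  proof (intro conjI Pbot s1 s2 ballI impI)
    fix s assume sP: "s \<in> perms n" and ss: "inv_set s \<subseteq> inv_set (al @ [n,b,c] @ be) \<and> inv_set s \<subseteq> inv_set (al @ [c,n,b] @ be)"
    have cs: "c \<in> set s" using sP c n2 unfolding perms_def by auto
    have "(n,b) \<notin> inv_set s"
      using inv_cotrans[of s n b c] sP ss m1 m2 cs bc c unfolding perms_def by blast
    then show "inv_set s \<subseteq> inv_set (al @ [b,c,n] @ be)" using s3 ss by blast
  qed
  have XB: "(al @ [n,b,c] @ be, al @ [b,c,n] @ be) \<in> R"
    by (rule lc_meet[OF LC lc_refl[OF LC PX] lc_sym[OF LC YT] j1 j2])
  have "inv_set (al @ [b,n,c] @ be) \<subseteq> inv_set (al @ [n,b,c] @ be)"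
    using d bc c by (auto simp: inv_simps)
  moreover have "inv_set (al @ [b,c,n] @ be) \<subseteq> inv_set (al @ [b,n,c] @ be)"
    using d bc c by (auto simp: inv_simps)
  ultimately show ?thesis
    using convex[OF LC lc_sym[OF LC XB] P] by blast
qed

lemma edge:
  assumes LC: "lattice_congruence n R" and n2: "n \<ge> 2" and c: "Suc c = n"
    and H: "(id_perm n, ins_max (n - 1) (id_perm (n - 1))) \<in> R"
    and P: "al @ [b,n] @ be \<in> perms n"
  shows "(al @ [b,n] @ be, al @ [n,b] @ be) \<in> R"
proof -
  have d: "distinct (al @ [b,n] @ be)" and st: "set (al @ [b,n] @ be) = {1..n}"
    using P unfolding perms_def by blast+
  have small: "\<And>x. x \<in> set (al @ [b,n] @ be) \<Longrightarrow> x \<noteq> c \<Longrightarrow> x \<noteq> n \<Longrightarrow> x < c"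
  proof -
    fix x assume "x \<in> set (al @ [b,n] @ be)" "x \<noteq> c" "x \<noteq> n"
    then have "x \<in> {1..n}" using st by blast
    then show "x < c" using \<open>x \<noteq> c\<close> \<open>x \<noteq> n\<close> c by auto
  qed
  have bn: "b < n" using small[of b] d c by auto
  show ?thesis
  proof (cases "b = c")
    case True
    then show ?thesis using stepA[OF LC n2 c H] P by simp
  next
    case False
    then have bc: "b < c" using bn c by simp
    have "c \<in> set (al @ [b,n] @ be)" using st c n2 by auto
    then have "c \<in> set al \<or> c \<in> set be" using False c by auto
    then show ?thesis
    proof
      assume "c \<in> set al"
      then obtain a1 a2 where al: "al = a1 @ c # a2" by (meson split_list)
      have a2s: "\<forall>x\<in>set a2. x < c" using small d unfolding al by auto
      have d2: "distinct (a1 @ c # a2 @ [b,n] @ be)" using d unfolding al by simp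
      have Pw: "(a1 @ a2) @ [c,b,n] @ be \<in> perms n" using P unfolding al perms_def by auto
      have Pu': "al @ [n,b] @ be \<in> perms n" using P unfolding perms_def by auto
      have W: "((a1 @ a2) @ [c,b,n] @ be, (a1 @ a2) @ [c,n,b] @ be) \<in> R"
        by (rule stepL[OF LC n2 c H bc Pw])
      have j1: "is_join n ((a1 @ a2) @ [c,b,n] @ be) (al @ [b,n] @ be) (al @ [b,n] @ be)"
        by (rule join_easy[OF P]) (use d2 a2s bc c in \<open>auto simp: inv_simps al\<close>)
      have j2: "is_join n ((a1 @ a2) @ [c,n,b] @ be) (al @ [b,n] @ be) (al @ [n,b] @ be)"
        by (rule join_easy[OF Pu']) (use d2 a2s bc c in \<open>auto simp: inv_simps al\<close>)
      show ?thesis by (rule lc_join[OF LC W lc_refl[OF LC P] j1 j2])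
    next
      assume "c \<in> set be"
      then obtain b1 b2 where be: "be = b1 @ c # b2" by (meson split_list)
      have b1s: "\<forall>x\<in>set b1. x < c" using small d unfolding be by auto
      have d2: "distinct (al @ [b,n] @ b1 @ c # b2)" using d unfolding be by simp
      have Pw: "al @ [b,n,c] @ (b1 @ b2) \<in> perms n" using P unfolding be perms_def by auto
      have Pu': "al @ [n,b] @ be \<in> perms n" using P unfolding perms_def by auto
      have W: "(al @ [b,n,c] @ (b1 @ b2), al @ [n,b,c] @ (b1 @ b2)) \<in> R"
        by (rule stepR[OF LC n2 c H bc Pw])
      have j1: "is_meet n (al @ [b,n,c] @ (b1 @ b2)) (al @ [n,b] @ be) (al @ [b,n] @ be)"
        by (rule meet_easy[OF P]) (use d2 b1s bc c in \<open>auto simp: inv_simps be\<close>)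
      have j2: "is_meet n (al @ [n,b,c] @ (b1 @ b2)) (al @ [n,b] @ be) (al @ [n,b] @ be)"
        by (rule meet_easy[OF Pu']) (use d2 b1s bc c in \<open>auto simp: inv_simps be\<close>)
      show ?thesis by (rule lc_meet[OF LC W lc_refl[OF LC Pu'] j1 j2])
    qed
  qed
qed

lemma ins_split:
  assumes "1 \<le> i" "i \<le> length p"
  shows "ins_max i p = take (i-1) p @ [length p + 1, p!(i-1)] @ drop i p"
    and "ins_max (i+1) p = take (i-1) p @ [p!(i-1), length p + 1] @ drop i p"
proof -
  have dr: "drop (i-1) p = p!(i-1) # drop i p"
    using assms Cons_nth_drop_Suc[of "i-1" p] by simp
  have tk: "take i p = take (i-1) p @ [p!(i-1)]"
    using assms take_Suc_conv_app_nth[of "i-1" p] by simp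
  show "ins_max i p = take (i-1) p @ [length p + 1, p!(i-1)] @ drop i p"
    unfolding ins_max_def dr by simp
  show "ins_max (i+1) p = take (i-1) p @ [p!(i-1), length p + 1] @ drop i p"
    unfolding ins_max_def using tk by simp
qed

lemma perms_len: "p \<in> perms m \<Longrightarrow> length p = m"
  unfolding perms_def using distinct_card by fastforce

theorem mainTheorem3:
  fixes n :: nat and R :: "(nat list \<times> nat list) set"
  assumes "n \<ge> 2"
    and "lattice_congruence n R"
  shows "((id_perm n, ins_max (n - 1) (id_perm (n - 1))) \<in> R
            \<longleftrightarrow> (\<exists>p\<in>perms (n - 1). \<forall>i. 1 \<le> i \<and> i < n \<longrightarrow> (ins_max i p, ins_max (i + 1) p) \<in> R))
       \<and> ((\<exists>p\<in>perms (n - 1). \<forall>i. 1 \<le> i \<and> i < n \<longrightarrow> (ins_max i p, ins_max (i + 1) p) \<in> R)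
            \<longleftrightarrow> (\<forall>p\<in>perms (n - 1). \<forall>i. 1 \<le> i \<and> i < n \<longrightarrow> (ins_max i p, ins_max (i + 1) p) \<in> R))"
proof -
  note n2 = assms(1) and LC = assms(2)
  define c where "c = n - 1"
  have c: "Suc c = n" using n2 c_def by simp
  let ?s = "ins_max (n - 1) (id_perm (n - 1))"
  let ?P1 = "(id_perm n, ?s) \<in> R"
  let ?P2 = "\<exists>p\<in>perms (n - 1). \<forall>i. 1 \<le> i \<and> i < n \<longrightarrow> (ins_max i p, ins_max (i + 1) p) \<in> R"
  let ?P3 = "\<forall>p\<in>perms (n - 1). \<forall>i. 1 \<le> i \<and> i < n \<longrightarrow> (ins_max i p, ins_max (i + 1) p) \<in> R"
  have I13: "?P1 \<Longrightarrow> ?P3"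
  proof (intro ballI allI impI)
    fix p i assume H: ?P1 and p: "p \<in> perms (n - 1)" and i: "1 \<le> i \<and> i < n"
    have lp: "length p = n - 1" using perms_len[OF p] .
    have il: "i \<le> length p" using i lp by linarith
    define al where "al = take (i-1) p"
    define b where "b = p!(i-1)"
    define be where "be = drop i p"
    have e1: "ins_max i p = al @ [n,b] @ be" and e2: "ins_max (i+1) p = al @ [b,n] @ be"
      using ins_split[OF _ il] i lp n2 unfolding al_def b_def be_def by auto
    have pe: "p = al @ b # be"
    proof -
      have "i - 1 < length p" using il i by linarith
      then show ?thesis unfolding al_def b_def be_def using i id_take_nth_drop[of "i-1" p] by simp
    qed
    have "n \<notin> set p" using p c unfolding perms_def by auto
    have s1: "set (al @ [b,n] @ be) = insert n (set p)" unfolding pe by auto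
    have s2: "set p = {1..c}" using p c unfolding perms_def by auto
    have s3: "insert n {1..c} = {1..n}" using c by auto
    have "distinct (al @ [b,n] @ be)" using p \<open>n \<notin> set p\<close> unfolding perms_def pe by auto
    then have P: "al @ [b,n] @ be \<in> perms n" unfolding perms_def using s1 s2 s3 by simp
    show "(ins_max i p, ins_max (i + 1) p) \<in> R"
      unfolding e1 e2 using edge[OF LC n2 c H P] lc_sym[OF LC] by blast
  qed
  have I32: "?P3 \<Longrightarrow> ?P2"
    using id_props(2)[of "n-1"] by blast
  have I21: "?P2 \<Longrightarrow> ?P1"
  proof -
    assume ?P2
    then obtain p where p: "p \<in> perms (n - 1)" and A: "\<forall>i. 1 \<le> i \<and> i < n \<longrightarrow> (ins_max i p, ins_max (i + 1) p) \<in> R"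
      by blast
    have lp: "length p = n - 1" using perms_len[OF p] .
    have "c \<in> set p" using p n2 c unfolding perms_def by auto
    then obtain al be where pe: "p = al @ c # be" by (meson split_list)
    define i where "i = length al + 1"
    have i: "1 \<le> i \<and> i < n" using lp pe i_def c by auto
    have e1: "ins_max i p = al @ [n,c] @ be" and e2: "ins_max (i+1) p = al @ [c,n] @ be"
      unfolding ins_max_def i_def using pe lp c by auto
    have Rxy: "(al @ [n,c] @ be, al @ [c,n] @ be) \<in> R" using A i e1 e2 by metis
    have Px: "al @ [n,c] @ be \<in> perms n" using LC Rxy lc_equiv unfolding equiv_def refl_on_def by blast
    have Py: "al @ [c,n] @ be \<in> perms n" using LC Rxy lc_equiv unfolding equiv_def refl_on_def by blast
    have d: "distinct (al @ [c,n] @ be)" using Py unfolding perms_def by blast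
    have invS: "inv_set ?s = {(n,c)}" using inv_s(1)[OF n2] c_def by simp
    have x1: "(n,c) \<in> inv_set (al @ [n,c] @ be)" using c by (auto simp: inv_simps)
    have x2: "(n,c) \<notin> inv_set (al @ [c,n] @ be)"
      using d c inv_lt inv_sub[of al] inv_sub[of be] by (auto simp: inv_simps)
    have m1: "is_meet n (al @ [n,c] @ be) ?s ?s"
      by (rule meet_easy[OF inv_s(2)[OF n2]]) (use invS x1 in auto)
    have m2: "is_meet n (al @ [c,n] @ be) ?s (id_perm n)"
      by (rule meet_easy[OF id_props(2)]) (use invS x2 id_props(1) in auto)
    have "(?s, id_perm n) \<in> R" by (rule lc_meet[OF LC Rxy lc_refl[OF LC inv_s(2)[OF n2]] m1 m2])
    then show ?P1 using lc_sym[OF LC] by blast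
  qed
  show ?thesis using I13 I32 I21 by blast
qed

end
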